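(* Let $\pi_1:V_1\to X_1$ and $\pi_2:V_2\to X_2$ be diffeological vector pseudo-bundles, let $(\tilde f,f)$ be a gluing of the former to the latter such that both $\tilde f$ and $f$ are subductions (onto their images), and let $s_i\in C^\infty(X_i,V_i)$ for $i=1,2$. If $s_1$ and $s_2$ are $(f,\tilde f)$-compatible, then $\mathcal{S}_1(s_1)$ and $s_2$ are $(f_\sim,\tilde f_\sim)$-compatible.
   Context: Diffeological spaces, smooth maps, subset/quotient diffeologies and subductions (smooth surjections with pushforward diffeology on the target) are as usual. A diffeological vector pseudo-bundle $\pi:V\to X$ is a smooth surjection with vector space fibres whose fibrewise addition, scalar multiplication and zero section are smooth. A gluing $(\tilde f,f)$: $f:Y\to X_2$ smooth on $Y\subseteq X_1$, $\tilde f:\pi_1^{-1}(Y)\to V_2$ smooth, $\pi_2\circ\tilde f=f\circ\pi_1$, linear on fibres. $s_1,s_2$ are $(f,\tilde f)$-compatible if $\tilde f(s_1(y))=s_2(f(y))$ for all $y\in Y$ (then $s_1$ is $(f,\tilde f)$-invariant: $\tilde f(s_1(y))=\tilde f(s_1(y'))$ whenever $f(y)=f(y')$). $X_1^f$ is the quotient of $X_1$ identifying $y,y'\in Y$ with $f(y)=f(y')$, $V_1^{\tilde f}$ the quotient of $V_1$ identifying $v,v'\in\pi_1^{-1}(Y)$ with $\tilde f(v)=\tilde f(v')$ (quotient diffeologies, projections $\chi_1^f,\chi_1^{\tilde f}$); $f,\tilde f$ induce $f_\sim:\chi_1^f(Y)\to X_2$ and $\tilde f_\sim:\chi_1^{\tilde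 f}(\pi_1^{-1}(Y))\to V_2$ with $f_\sim\circ\chi_1^f=f$, $\tilde f_\sim\circ\chi_1^{\tilde f}=\tilde f$. For an $(f,\tilde f)$-invariant $s_1$, $\mathcal{S}_1(s_1)$ is the unique smooth section of $V_1^{\tilde f}\to X_1^f$ with $\mathcal{S}_1(s_1)\circ\chi_1^f=\chi_1^{\tilde f}\circ s_1$. A section $\sigma$ of $V_1^{\tilde f}$ and $s_2$ are $(f_\sim,\tilde f_\sim)$-compatible if $\tilde f_\sim(\sigma(z))=s_2(f_\sim(z))$ for all $z\in\chi_1^f(Y)$. *)

theory Defs
  imports "HOL-Analysis.Analysis"
begin

section \<open>Euclidean domains R^n (as functions nat => real vanishing from index n on)\<close>

type_synonym rn = "nat \<Rightarrow> real"

text \<open>A plot is a triple (n, U, p): U an open subset of R^n and p : U -> X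
  (values of p outside U are irrelevant).\<close>
type_synonym 'a plot = "nat \<times> rn set \<times> (rn \<Rightarrow> 'a)"
type_synonym 'a diffeology = "'a plot set"

definition euclid :: "nat \<Rightarrow> rn set" where
  "euclid n = {x. \<forall>i\<ge>n. x i = 0}"

definition edist :: "nat \<Rightarrow> rn \<Rightarrow> rn \<Rightarrow> real" where
  "edist n x y = sqrt (\<Sum>i<n. (x i - y i)^2)"

definition eopen :: "nat \<Rightarrow> rn set \<Rightarrow> bool" where
  "eopen n U \<longleftrightarrow> U \<subseteq> euclid n \<and>
     (\<forall>x\<in>U. \<exists>e>0. \<forall>y\<in>euclid n. edist n x y < e \<longrightarrow> y \<in> U)"

definition econt :: "nat \<Rightarrow> rn set \<Rightarrow> (rn \<Rightarrow> real) \<Rightarrow> bool" where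
  "econt n U g \<longleftrightarrow>
     (\<forall>x\<in>U. \<forall>e>0. \<exists>d>0. \<forall>y\<in>U. edist n x y < d \<longrightarrow> \<bar>g y - g x\<bar> < e)"

definition has_partial :: "(rn \<Rightarrow> real) \<Rightarrow> nat \<Rightarrow> rn \<Rightarrow> real \<Rightarrow> bool" where
  "has_partial g i x d \<longleftrightarrow> ((\<lambda>t. g (x(i := x i + t))) has_real_derivative d) (at 0)"

coinductive cinf :: "nat \<Rightarrow> rn set \<Rightarrow> (rn \<Rightarrow> real) \<Rightarrow> bool" for n U where
  "econt n U g \<Longrightarrow> (\<forall>i<n. \<exists>h. (\<forall>x\<in>U. has_partial g i x (h x)) \<and> cinf n U h)
     \<Longrightarrow> cinf n U g"

definition smooth_euclid :: "nat \<Rightarrow> rn set \<Rightarrow> nat \<Rightarrow> (rn \<Rightarrow> rn) \<Rightarrow> bool" where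
  "smooth_euclid n U m h \<longleftrightarrow> (\<forall>x\<in>U. h x \<in> euclid m) \<and> (\<forall>j<m. cinf n U (\<lambda>x. h x j))"

definition diffeology :: "'a set \<Rightarrow> 'a diffeology \<Rightarrow> bool" where
  "diffeology X D \<longleftrightarrow>
     (\<forall>(n, U, p)\<in>D. eopen n U \<and> p ` U \<subseteq> X) \<and>
     (\<forall>n U p q. (n, U, p) \<in> D \<and> (\<forall>u\<in>U. q u = p u) \<longrightarrow> (n, U, q) \<in> D) \<and>
     (\<forall>n U x. eopen n U \<and> x \<in> X \<longrightarrow> (n, U, \<lambda>_. x) \<in> D) \<and>
     (\<forall>n U p m V h. (n, U, p) \<in> D \<and> eopen m V \<and> smooth_euclid m V n h \<and> h ` V \<subseteq> U
        \<longrightarrow> (m, V, p \<circ> h) \<in> D) \<and>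
     (\<forall>n U p. eopen n U \<and> p ` U \<subseteq> X \<and>
        (\<forall>u\<in>U. \<exists>W. eopen n W \<and> u \<in> W \<and> W \<subseteq> U \<and> (n, W, p) \<in> D)
        \<longrightarrow> (n, U, p) \<in> D)"

definition dsmooth :: "'a set \<Rightarrow> 'a diffeology \<Rightarrow> 'b set \<Rightarrow> 'b diffeology \<Rightarrow> ('a \<Rightarrow> 'b) \<Rightarrow> bool" where
  "dsmooth X DX Y DY f \<longleftrightarrow> f ` X \<subseteq> Y \<and> (\<forall>(n, U, p)\<in>DX. (n, U, f \<circ> p) \<in> DY)"

definition subset_diff :: "'a set \<Rightarrow> 'a diffeology \<Rightarrow> 'a diffeology" where
  "subset_diff A D = {(n, U, p). (n, U, p) \<in> D \<and> p ` U \<subseteq> A}"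

definition prod_diff :: "'a diffeology \<Rightarrow> 'b diffeology \<Rightarrow> ('a \<times> 'b) diffeology" where
  "prod_diff DA DB = {(n, U, p). (n, U, fst \<circ> p) \<in> DA \<and> (n, U, snd \<circ> p) \<in> DB}"

definition real_diff :: "real diffeology" where
  "real_diff = {(n, U, g). eopen n U \<and> cinf n U g}"

definition pushforward_diff :: "'a diffeology \<Rightarrow> 'b set \<Rightarrow> ('a \<Rightarrow> 'b) \<Rightarrow> 'b diffeology" where
  "pushforward_diff D Y f = {(n, U, q). eopen n U \<and> q ` U \<subseteq> Y \<and>
     (\<forall>u\<in>U. \<exists>W p. eopen n W \<and> u \<in> W \<and> W \<subseteq> U \<and> (n, W, p) \<in> D \<and>
        (\<forall>w\<in>W. q w = f (p w)))}"

definition subduction :: "'a set \<Rightarrow> 'a diffeology \<Rightarrow> 'b set \<Rightarrow> 'b diffeology \<Rightarrow> ('a \<Rightarrow> 'b) \<Rightarrow> bool" where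
  "subduction X DX Y DY f \<longleftrightarrow>
     dsmooth X DX Y DY f \<and> f ` X = Y \<and> DY = pushforward_diff DX Y f"

definition fibre_vs :: "'v set \<Rightarrow> ('v \<Rightarrow> 'v \<Rightarrow> 'v) \<Rightarrow> (real \<Rightarrow> 'v \<Rightarrow> 'v) \<Rightarrow> 'v \<Rightarrow> bool" where
  "fibre_vs F add smul z \<longleftrightarrow>
     z \<in> F \<and> (\<forall>v\<in>F. \<forall>w\<in>F. add v w \<in> F) \<and> (\<forall>c. \<forall>v\<in>F. smul c v \<in> F) \<and>
     (\<forall>u\<in>F. \<forall>v\<in>F. \<forall>w\<in>F. add (add u v) w = add u (add v w)) \<and>
     (\<forall>v\<in>F. \<forall>w\<in>F. add v w = add w v) \<and>
     (\<forall>v\<in>F. add v z = v) \<and>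
     (\<forall>v\<in>F. add v (smul (-1) v) = z) \<and>
     (\<forall>a. \<forall>v\<in>F. \<forall>w\<in>F. smul a (add v w) = add (smul a v) (smul a w)) \<and>
     (\<forall>a b. \<forall>v\<in>F. smul (a + b) v = add (smul a v) (smul b v)) \<and>
     (\<forall>a b. \<forall>v\<in>F. smul a (smul b v) = smul (a * b) v) \<and>
     (\<forall>v\<in>F. smul 1 v = v)"

definition fibred_pairs :: "'v set \<Rightarrow> ('v \<Rightarrow> 'x) \<Rightarrow> ('v \<times> 'v) set" where
  "fibred_pairs V \<pi> = {(v, w). v \<in> V \<and> w \<in> V \<and> \<pi> v = \<pi> w}"

definition vpb :: "'v set \<Rightarrow> 'v diffeology \<Rightarrow> 'x set \<Rightarrow> 'x diffeology \<Rightarrow> ('v \<Rightarrow> 'x)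
    \<Rightarrow> ('v \<Rightarrow> 'v \<Rightarrow> 'v) \<Rightarrow> (real \<Rightarrow> 'v \<Rightarrow> 'v) \<Rightarrow> ('x \<Rightarrow> 'v) \<Rightarrow> bool" where
  "vpb V DV X DX \<pi> add smul zero \<longleftrightarrow>
     diffeology V DV \<and> diffeology X DX \<and>
     dsmooth V DV X DX \<pi> \<and> \<pi> ` V = X \<and>
     (\<forall>x\<in>X. fibre_vs {v\<in>V. \<pi> v = x} add smul (zero x)) \<and>
     dsmooth (fibred_pairs V \<pi>) (subset_diff (fibred_pairs V \<pi>) (prod_diff DV DV)) V DV
       (\<lambda>(v, w). add v w) \<and>
     dsmooth (UNIV \<times> V) (prod_diff real_diff DV) V DV (\<lambda>(c, v). smul c v) \<and>
     dsmooth X DX V DV zero"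

definition bpreim :: "'v set \<Rightarrow> ('v \<Rightarrow> 'x) \<Rightarrow> 'x set \<Rightarrow> 'v set" where
  "bpreim V \<pi> Y = {v \<in> V. \<pi> v \<in> Y}"

definition smooth_section :: "'v set \<Rightarrow> 'v diffeology \<Rightarrow> 'x set \<Rightarrow> 'x diffeology \<Rightarrow> ('v \<Rightarrow> 'x)
    \<Rightarrow> ('x \<Rightarrow> 'v) \<Rightarrow> bool" where
  "smooth_section V DV X DX \<pi> s \<longleftrightarrow> dsmooth X DX V DV s \<and> (\<forall>x\<in>X. \<pi> (s x) = x)"

definition gluing :: "'v1 set \<Rightarrow> 'v1 diffeology \<Rightarrow> 'x1 set \<Rightarrow> 'x1 diffeology \<Rightarrow> ('v1 \<Rightarrow> 'x1)
    \<Rightarrow> ('v1 \<Rightarrow> 'v1 \<Rightarrow> 'v1) \<Rightarrow> (real \<Rightarrow> 'v1 \<Rightarrow> 'v1)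
    \<Rightarrow> 'v2 set \<Rightarrow> 'v2 diffeology \<Rightarrow> 'x2 set \<Rightarrow> 'x2 diffeology \<Rightarrow> ('v2 \<Rightarrow> 'x2)
    \<Rightarrow> ('v2 \<Rightarrow> 'v2 \<Rightarrow> 'v2) \<Rightarrow> (real \<Rightarrow> 'v2 \<Rightarrow> 'v2)
    \<Rightarrow> 'x1 set \<Rightarrow> ('x1 \<Rightarrow> 'x2) \<Rightarrow> ('v1 \<Rightarrow> 'v2) \<Rightarrow> bool" where
  "gluing V1 DV1 X1 DX1 \<pi>1 add1 smul1 V2 DV2 X2 DX2 \<pi>2 add2 smul2 Y f ft \<longleftrightarrow>
     Y \<subseteq> X1 \<and>
     dsmooth Y (subset_diff Y DX1) X2 DX2 f \<and>
     dsmooth (bpreim V1 \<pi>1 Y) (subset_diff (bpreim V1 \<pi>1 Y) DV1) V2 DV2 ft \<and>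
     (\<forall>v\<in>bpreim V1 \<pi>1 Y. \<pi>2 (ft v) = f (\<pi>1 v)) \<and>
     (\<forall>v\<in>bpreim V1 \<pi>1 Y. \<forall>w\<in>bpreim V1 \<pi>1 Y. \<pi>1 v = \<pi>1 w \<longrightarrow>
        ft (add1 v w) = add2 (ft v) (ft w)) \<and>
     (\<forall>c. \<forall>v\<in>bpreim V1 \<pi>1 Y. ft (smul1 c v) = smul2 c (ft v))"

definition compatible :: "'x1 set \<Rightarrow> ('x1 \<Rightarrow> 'x2) \<Rightarrow> ('v1 \<Rightarrow> 'v2) \<Rightarrow> ('x1 \<Rightarrow> 'v1) \<Rightarrow> ('x2 \<Rightarrow> 'v2) \<Rightarrow> bool" where
  "compatible Y f ft s1 s2 \<longleftrightarrow> (\<forall>y\<in>Y. ft (s1 y) = s2 (f y))"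

definition glue_rel :: "'a set \<Rightarrow> 'a set \<Rightarrow> ('a \<Rightarrow> 'b) \<Rightarrow> 'a rel" where
  "glue_rel A B g = {(a, a'). a \<in> A \<and> a' \<in> A \<and> (a = a' \<or> (a \<in> B \<and> a' \<in> B \<and> g a = g a'))}"

definition glue_quot :: "'a set \<Rightarrow> 'a set \<Rightarrow> ('a \<Rightarrow> 'b) \<Rightarrow> 'a set set" where
  "glue_quot A B g = A // glue_rel A B g"

definition glue_proj :: "'a set \<Rightarrow> 'a set \<Rightarrow> ('a \<Rightarrow> 'b) \<Rightarrow> 'a \<Rightarrow> 'a set" where
  "glue_proj A B g a = glue_rel A B g `` {a}"

definition quot_diff :: "'a set \<Rightarrow> 'a diffeology \<Rightarrow> 'a set \<Rightarrow> ('a \<Rightarrow> 'b) \<Rightarrow> 'a set diffeology" where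
  "quot_diff A D B g = pushforward_diff D (glue_quot A B g) (glue_proj A B g)"

definition induced_map :: "'a set \<Rightarrow> 'a set \<Rightarrow> ('a \<Rightarrow> 'b) \<Rightarrow> 'a set \<Rightarrow> 'b" where
  "induced_map A B g = (THE h. (\<forall>b\<in>B. h (glue_proj A B g b) = g b) \<and>
      (\<forall>z. z \<notin> glue_proj A B g ` B \<longrightarrow> h z = undefined))"

definition S1 :: "'x1 set \<Rightarrow> 'x1 set \<Rightarrow> ('x1 \<Rightarrow> 'x2) \<Rightarrow> 'v1 set \<Rightarrow> ('v1 \<Rightarrow> 'x1) \<Rightarrow> ('v1 \<Rightarrow> 'v2)
    \<Rightarrow> ('x1 \<Rightarrow> 'v1) \<Rightarrow> 'x1 set \<Rightarrow> 'v1 set" where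
  "S1 X1 Y f V1 \<pi>1 ft s1 = (THE \<sigma>.
      (\<forall>x\<in>X1. \<sigma> (glue_proj X1 Y f x) = glue_proj V1 (bpreim V1 \<pi>1 Y) ft (s1 x)) \<and>
      (\<forall>z. z \<notin> glue_quot X1 Y f \<longrightarrow> \<sigma> z = undefined))"

end

theory Submission
  imports Defs
begin

lemma gp_self: "a \<in> A \<Longrightarrow> a \<in> glue_proj A B g a"
  by (simp add: glue_proj_def glue_rel_def)

lemma gp_eq: "a \<in> A \<Longrightarrow> a' \<in> A \<Longrightarrow> glue_proj A B g a = glue_proj A B g a'
   \<Longrightarrow> a = a' \<or> (a \<in> B \<and> a' \<in> B \<and> g a = g a')"
proof -
  assume h: "a \<in> A" "a' \<in> A" "glue_proj A B g a = glue_proj A B g a'"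
  then have "a' \<in> glue_proj A B g a" using gp_self[of a' A B g] by simp
  then show ?thesis by (auto simp: glue_proj_def glue_rel_def)
qed

lemma gp_same: assumes "a \<in> B" "a' \<in> B" "B \<subseteq> A" "g a = g a'"
  shows "glue_proj A B g a = glue_proj A B g a'"
proof
  show "glue_proj A B g a \<subseteq> glue_proj A B g a'"
  proof
    fix w assume "w \<in> glue_proj A B g a"
    then have "w \<in> A" "a = w \<or> (w \<in> B \<and> g a = g w)" by (auto simp: glue_proj_def glue_rel_def)
    then show "w \<in> glue_proj A B g a'" using assms by (auto simp: glue_proj_def glue_rel_def)
  qed
next
  show "glue_proj A B g a' \<subseteq> glue_proj A B g a"
  proof
    fix w assume "w \<in> glue_proj A B g a'"
    then have "w \<in> A" "a' = w \<or> (w \<in> B \<and> g a' = g w)" by (auto simp: glue_proj_def glue_rel_def)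
    then show "w \<in> glue_proj A B g a" using assms by (auto simp: glue_proj_def glue_rel_def)
  qed
qed

lemma induced_map_val:
  assumes BA: "B \<subseteq> A" and b: "b \<in> B"
  shows "induced_map A B g (glue_proj A B g b) = g b"
proof -
  define h0 where "h0 = (\<lambda>z. if z \<in> glue_proj A B g ` B
     then g (SOME b. b \<in> B \<and> glue_proj A B g b = z) else undefined)"
  have wd: "g (SOME c. c \<in> B \<and> glue_proj A B g c = glue_proj A B g b') = g b'" if "b' \<in> B" for b'
  proof -
    have ex: "\<exists>c. c \<in> B \<and> glue_proj A B g c = glue_proj A B g b'" using that by blast
    obtain c where c: "c = (SOME c. c \<in> B \<and> glue_proj A B g c = glue_proj A B g b')" by blast
    have "c \<in> B \<and> glue_proj A B g c = glue_proj A B g b'" using someI_ex[OF ex] c by simp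
    then have "c = b' \<or> g c = g b'" using gp_eq[of c A b' B g] BA that by blast
    then show ?thesis using c by auto
  qed
  have P: "(\<forall>b\<in>B. h0 (glue_proj A B g b) = g b) \<and>
      (\<forall>z. z \<notin> glue_proj A B g ` B \<longrightarrow> h0 z = undefined)"
    using wd by (auto simp: h0_def)
  have "induced_map A B g = h0"
    unfolding induced_map_def
  proof (rule the_equality)
    show "(\<forall>b\<in>B. h0 (glue_proj A B g b) = g b) \<and>
      (\<forall>z. z \<notin> glue_proj A B g ` B \<longrightarrow> h0 z = undefined)" by (rule P)
  next
    fix h assume hp: "(\<forall>b\<in>B. h (glue_proj A B g b) = g b) \<and>
      (\<forall>z. z \<notin> glue_proj A B g ` B \<longrightarrow> h z = undefined)"
    show "h = h0"
    proof
      fix z show "h z = h0 z"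
      proof (cases "z \<in> glue_proj A B g ` B")
        case True then obtain b' where "b' \<in> B" "z = glue_proj A B g b'" by blast
        then show ?thesis using hp P by simp
      next
        case False then show ?thesis using hp P by simp
      qed
    qed
  qed
  then show ?thesis using P b by simp
qed

lemma S1_val:
  assumes inv: "\<And>x x'. x \<in> X1 \<Longrightarrow> x' \<in> X1 \<Longrightarrow> glue_proj X1 Y f x = glue_proj X1 Y f x' \<Longrightarrow>
     glue_proj V1 (bpreim V1 \<pi>1 Y) ft (s1 x) = glue_proj V1 (bpreim V1 \<pi>1 Y) ft (s1 x')"
    and x: "x \<in> X1"
  shows "S1 X1 Y f V1 \<pi>1 ft s1 (glue_proj X1 Y f x) = glue_proj V1 (bpreim V1 \<pi>1 Y) ft (s1 x)"
proof -
  let ?p = "glue_proj X1 Y f" and ?q = "glue_proj V1 (bpreim V1 \<pi>1 Y) ft"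
  have Q: "glue_quot X1 Y f = ?p ` X1"
    unfolding glue_quot_def glue_proj_def quotient_def by blast
  define s0 where "s0 = (\<lambda>z. if z \<in> glue_quot X1 Y f
     then ?q (s1 (SOME x. x \<in> X1 \<and> ?p x = z)) else undefined)"
  have wd: "?q (s1 (SOME c. c \<in> X1 \<and> ?p c = ?p x')) = ?q (s1 x')" if "x' \<in> X1" for x'
  proof -
    have ex: "\<exists>c. c \<in> X1 \<and> ?p c = ?p x'" using that by blast
    have "(SOME c. c \<in> X1 \<and> ?p c = ?p x') \<in> X1 \<and> ?p (SOME c. c \<in> X1 \<and> ?p c = ?p x') = ?p x'"
      using someI_ex[OF ex] .
    then show ?thesis using inv that by blast
  qed
  have P: "(\<forall>x\<in>X1. s0 (?p x) = ?q (s1 x)) \<and> (\<forall>z. z \<notin> glue_quot X1 Y f \<longrightarrow> s0 z = undefined)"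
    using wd Q by (auto simp: s0_def)
  have "S1 X1 Y f V1 \<pi>1 ft s1 = s0"
    unfolding S1_def
  proof (rule the_equality)
    show "(\<forall>x\<in>X1. s0 (?p x) = ?q (s1 x)) \<and> (\<forall>z. z \<notin> glue_quot X1 Y f \<longrightarrow> s0 z = undefined)"
      by (rule P)
  next
    fix h assume hp: "(\<forall>x\<in>X1. h (?p x) = ?q (s1 x)) \<and> (\<forall>z. z \<notin> glue_quot X1 Y f \<longrightarrow> h z = undefined)"
    show "h = s0"
    proof
      fix z show "h z = s0 z"
      proof (cases "z \<in> glue_quot X1 Y f")
        case True then obtain x' where "x' \<in> X1" "z = ?p x'" using Q by blast
        then show ?thesis using hp P by simp
      next
        case False then show ?thesis using hp P by simp
      qed
    qed
  qed
  then show ?thesis using P x by simp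
qed

theorem proposition2p26:
  fixes V1 :: "'v1 set" and DV1 :: "'v1 diffeology" and X1 :: "'x1 set" and DX1 :: "'x1 diffeology"
    and \<pi>1 :: "'v1 \<Rightarrow> 'x1" and add1 :: "'v1 \<Rightarrow> 'v1 \<Rightarrow> 'v1" and smul1 :: "real \<Rightarrow> 'v1 \<Rightarrow> 'v1"
    and zero1 :: "'x1 \<Rightarrow> 'v1"
    and V2 :: "'v2 set" and DV2 :: "'v2 diffeology" and X2 :: "'x2 set" and DX2 :: "'x2 diffeology"
    and \<pi>2 :: "'v2 \<Rightarrow> 'x2" and add2 :: "'v2 \<Rightarrow> 'v2 \<Rightarrow> 'v2" and smul2 :: "real \<Rightarrow> 'v2 \<Rightarrow> 'v2"
    and zero2 :: "'x2 \<Rightarrow> 'v2"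
    and Y :: "'x1 set" and f :: "'x1 \<Rightarrow> 'x2" and ft :: "'v1 \<Rightarrow> 'v2"
    and s1 :: "'x1 \<Rightarrow> 'v1" and s2 :: "'x2 \<Rightarrow> 'v2"
  assumes bundle1: "vpb V1 DV1 X1 DX1 \<pi>1 add1 smul1 zero1"
    and bundle2: "vpb V2 DV2 X2 DX2 \<pi>2 add2 smul2 zero2"
    and glue: "gluing V1 DV1 X1 DX1 \<pi>1 add1 smul1 V2 DV2 X2 DX2 \<pi>2 add2 smul2 Y f ft"
    and f_subd: "subduction Y (subset_diff Y DX1) (f ` Y) (subset_diff (f ` Y) DX2) f"
    and ft_subd: "subduction (bpreim V1 \<pi>1 Y) (subset_diff (bpreim V1 \<pi>1 Y) DV1)
                    (ft ` bpreim V1 \<pi>1 Y) (subset_diff (ft ` bpreim V1 \<pi>1 Y) DV2) ft"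
    and sec1: "smooth_section V1 DV1 X1 DX1 \<pi>1 s1"
    and sec2: "smooth_section V2 DV2 X2 DX2 \<pi>2 s2"
    and compat: "compatible Y f ft s1 s2"
  shows "compatible (glue_proj X1 Y f ` Y)
           (induced_map X1 Y f) (induced_map V1 (bpreim V1 \<pi>1 Y) ft)
           (S1 X1 Y f V1 \<pi>1 ft s1) s2"
proof -
  have YX: "Y \<subseteq> X1" using glue by (simp add: gluing_def)
  have s1V: "\<And>x. x \<in> X1 \<Longrightarrow> s1 x \<in> V1" and s1p: "\<And>x. x \<in> X1 \<Longrightarrow> \<pi>1 (s1 x) = x"
    using sec1 by (auto simp: smooth_section_def dsmooth_def)
  have s1B: "\<And>y. y \<in> Y \<Longrightarrow> s1 y \<in> bpreim V1 \<pi>1 Y"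
    using s1V s1p YX by (auto simp: bpreim_def)
  have inv: "glue_proj V1 (bpreim V1 \<pi>1 Y) ft (s1 x) = glue_proj V1 (bpreim V1 \<pi>1 Y) ft (s1 x')"
    if "x \<in> X1" "x' \<in> X1" "glue_proj X1 Y f x = glue_proj X1 Y f x'" for x x'
  proof -
    have "x = x' \<or> (x \<in> Y \<and> x' \<in> Y \<and> f x = f x')" using gp_eq[OF that] .
    then show ?thesis
    proof
      assume "x \<in> Y \<and> x' \<in> Y \<and> f x = f x'"
      then have "ft (s1 x) = ft (s1 x')" "s1 x \<in> bpreim V1 \<pi>1 Y" "s1 x' \<in> bpreim V1 \<pi>1 Y"
        using compat s1B by (auto simp: compatible_def)
      then show ?thesis using gp_same[of "s1 x" "bpreim V1 \<pi>1 Y" "s1 x'" V1 ft] by (simp add: bpreim_def)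
    qed simp
  qed
  show ?thesis unfolding compatible_def
  proof
    fix z assume "z \<in> glue_proj X1 Y f ` Y"
    then obtain y where y: "y \<in> Y" "z = glue_proj X1 Y f y" by blast
    have "S1 X1 Y f V1 \<pi>1 ft s1 z = glue_proj V1 (bpreim V1 \<pi>1 Y) ft (s1 y)"
      using S1_val[of X1 Y f V1 \<pi>1 ft s1 y, OF inv] y YX by blast
    then have "induced_map V1 (bpreim V1 \<pi>1 Y) ft (S1 X1 Y f V1 \<pi>1 ft s1 z) = ft (s1 y)"
      using induced_map_val[of "bpreim V1 \<pi>1 Y" V1 "s1 y" ft] s1B y by (simp add: bpreim_def)
    moreover have "induced_map X1 Y f z = f y" using induced_map_val[OF YX y(1)] y by simp
    ultimately show "induced_map V1 (bpreim V1 \<pi>1 Y) ft (S1 X1 Y f V1 \<pi>1 ft s1 z) =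
       s2 (induced_map X1 Y f z)" using compat y by (simp add: compatible_def)
  qed
qed

end
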